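(* Let $S$ be an inverse semigroup with zero. Then there is an order isomorphism (with respect to inclusion) between the set of proper filters of $S$ and the set of prime filters of $\mathsf{D}(S)$.
   Context: The natural partial order is used; $X^{\uparrow}=\{s: x\le s \text{ for some } x\in X\}$, $X^{\downarrow}=\{s : s\le x \text{ for some } x\in X\}$. A filter in an inverse semigroup is a nonempty subset $F$ with $F=F^{\uparrow}$ such that for all $a,b\in F$ there is $c\in F$ with $c\le a,b$; it is proper if it does not contain zero. Elements $s,t$ are compatible if $s^{-1}t,st^{-1}$ are idempotents. $\mathsf{D}(S)$ is the set of subsets $\{a_1,\dots,a_m\}^{\downarrow}$ with $\{a_1,\dots,a_m\}$ a finite compatible subset of $S$, under subset multiplication, ordered by inclusion; it is a distributive inverse semigroup (joins of compatible elements are unions, and its zero is $\{0\}$). A prime filter of a distributive inverse semigroup is a proper filter $P$ such that whenever $a,b$ are compatible and $a\vee b\in P$, then $a\in P$ or $b\in P$. *)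

theory Defs
  imports Main
begin

definition is_inv :: "'a set \<Rightarrow> ('a \<Rightarrow> 'a \<Rightarrow> 'a) \<Rightarrow> 'a \<Rightarrow> 'a \<Rightarrow> bool" where
  "is_inv C m a b \<longleftrightarrow> b \<in> C \<and> m (m a b) a = a \<and> m (m b a) b = b"

definition inverse_semigroup :: "'a set \<Rightarrow> ('a \<Rightarrow> 'a \<Rightarrow> 'a) \<Rightarrow> bool" where
  "inverse_semigroup C m \<longleftrightarrow>
     (\<forall>a\<in>C. \<forall>b\<in>C. m a b \<in> C) \<and>
     (\<forall>a\<in>C. \<forall>b\<in>C. \<forall>c\<in>C. m (m a b) c = m a (m b c)) \<and>
     (\<forall>a\<in>C. \<exists>!b. is_inv C m a b)"

definition sinv :: "'a set \<Rightarrow> ('a \<Rightarrow> 'a \<Rightarrow> 'a) \<Rightarrow> 'a \<Rightarrow> 'a" where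
  "sinv C m a = (THE b. is_inv C m a b)"

definition idem :: "'a set \<Rightarrow> ('a \<Rightarrow> 'a \<Rightarrow> 'a) \<Rightarrow> 'a \<Rightarrow> bool" where
  "idem C m e \<longleftrightarrow> e \<in> C \<and> m e e = e"

definition is_zero :: "'a set \<Rightarrow> ('a \<Rightarrow> 'a \<Rightarrow> 'a) \<Rightarrow> 'a \<Rightarrow> bool" where
  "is_zero C m z \<longleftrightarrow> z \<in> C \<and> (\<forall>x\<in>C. m z x = z \<and> m x z = z)"

definition nat_le :: "'a set \<Rightarrow> ('a \<Rightarrow> 'a \<Rightarrow> 'a) \<Rightarrow> 'a \<Rightarrow> 'a \<Rightarrow> bool" where
  "nat_le C m s t \<longleftrightarrow> s \<in> C \<and> t \<in> C \<and> (\<exists>e. idem C m e \<and> s = m e t)"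

definition up_closure :: "'a set \<Rightarrow> ('a \<Rightarrow> 'a \<Rightarrow> bool) \<Rightarrow> 'a set \<Rightarrow> 'a set" where
  "up_closure C le X = {s \<in> C. \<exists>x\<in>X. le x s}"

definition down_closure :: "'a set \<Rightarrow> ('a \<Rightarrow> 'a \<Rightarrow> bool) \<Rightarrow> 'a set \<Rightarrow> 'a set" where
  "down_closure C le X = {s \<in> C. \<exists>x\<in>X. le s x}"

definition is_filter :: "'a set \<Rightarrow> ('a \<Rightarrow> 'a \<Rightarrow> bool) \<Rightarrow> 'a set \<Rightarrow> bool" where
  "is_filter C le F \<longleftrightarrow> F \<noteq> {} \<and> F \<subseteq> C \<and> F = up_closure C le F \<and>
     (\<forall>a\<in>F. \<forall>b\<in>F. \<exists>c\<in>F. le c a \<and> le c b)"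

definition proper_filter :: "'a set \<Rightarrow> ('a \<Rightarrow> 'a \<Rightarrow> bool) \<Rightarrow> 'a \<Rightarrow> 'a set \<Rightarrow> bool" where
  "proper_filter C le z F \<longleftrightarrow> is_filter C le F \<and> z \<notin> F"

definition compatible :: "'a set \<Rightarrow> ('a \<Rightarrow> 'a \<Rightarrow> 'a) \<Rightarrow> 'a \<Rightarrow> 'a \<Rightarrow> bool" where
  "compatible C m s t \<longleftrightarrow> idem C m (m (sinv C m s) t) \<and> idem C m (m s (sinv C m t))"

definition setmult :: "('a \<Rightarrow> 'a \<Rightarrow> 'a) \<Rightarrow> 'a set \<Rightarrow> 'a set \<Rightarrow> 'a set" where
  "setmult m A B = {m a b | a b. a \<in> A \<and> b \<in> B}"

definition Dset :: "'a set \<Rightarrow> ('a \<Rightarrow> 'a \<Rightarrow> 'a) \<Rightarrow> 'a set set" where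
  "Dset C m = {down_closure C (nat_le C m) X | X.
      finite X \<and> X \<noteq> {} \<and> X \<subseteq> C \<and> (\<forall>s\<in>X. \<forall>t\<in>X. compatible C m s t)}"

text \<open>Prime filters of D(S): ordered by inclusion, zero {z}, joins of compatible elements are unions.\<close>
definition prime_filter_D :: "'a set \<Rightarrow> ('a \<Rightarrow> 'a \<Rightarrow> 'a) \<Rightarrow> 'a \<Rightarrow> 'a set set \<Rightarrow> bool" where
  "prime_filter_D C m z P \<longleftrightarrow>
     proper_filter (Dset C m) (\<subseteq>) {z} P \<and>
     (\<forall>a\<in>Dset C m. \<forall>b\<in>Dset C m.
        compatible (Dset C m) (setmult m) a b \<and> a \<union> b \<in> P \<longrightarrow> a \<in> P \<or> b \<in> P)"

end

theory Submission imports Defs begin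

locale isg =
  fixes S :: "'a set" and m :: "'a \<Rightarrow> 'a \<Rightarrow> 'a"
  assumes isg: "inverse_semigroup S m"
begin

abbreviation i where "i \<equiv> sinv S m"
abbreviation E where "E \<equiv> idem S m"
abbreviation le where "le \<equiv> nat_le S m"

lemma cl[simp]: "a\<in>S \<Longrightarrow> b\<in>S \<Longrightarrow> m a b \<in> S"
  using isg unfolding inverse_semigroup_def by blast

lemma assoc: "a\<in>S \<Longrightarrow> b\<in>S \<Longrightarrow> c\<in>S \<Longrightarrow> m (m a b) c = m a (m b c)"
  using isg unfolding inverse_semigroup_def by blast

lemma inv_ex1: "a\<in>S \<Longrightarrow> \<exists>!b. is_inv S m a b"
  using isg unfolding inverse_semigroup_def by blast

lemma inv: "a \<in> S \<Longrightarrow> is_inv S m a (i a)"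
  unfolding sinv_def using inv_ex1 by (rule theI')

lemma inv_S[simp]: "a \<in> S \<Longrightarrow> i a \<in> S"
  using inv[of a] unfolding is_inv_def by simp

lemma inv1[simp]: "a \<in> S \<Longrightarrow> m a (m (i a) a) = a"
  using inv[of a] unfolding is_inv_def by (simp add: assoc)

lemma inv2[simp]: "a \<in> S \<Longrightarrow> m (i a) (m a (i a)) = i a"
  using inv[of a] unfolding is_inv_def by (simp add: assoc)

lemma inv1t[simp]: "a \<in> S \<Longrightarrow> t \<in> S \<Longrightarrow> m a (m (i a) (m a t)) = m a t"
  by (metis assoc cl inv1 inv_S)

lemma inv2t[simp]: "a \<in> S \<Longrightarrow> t \<in> S \<Longrightarrow> m (i a) (m a (m (i a) t)) = m (i a) t"
  by (metis assoc cl inv2 inv_S)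

lemma inv_unique: "a\<in>S \<Longrightarrow> is_inv S m a b \<Longrightarrow> b = i a"
  using inv inv_ex1 by blast

lemma idem_S: "E e \<Longrightarrow> e \<in> S" by (simp add: idem_def)
lemma idem_sq: "E e \<Longrightarrow> m e e = e" by (simp add: idem_def)
lemma idem_sqt: "E e \<Longrightarrow> t \<in> S \<Longrightarrow> m e (m e t) = m e t"
  by (metis assoc idem_def)

lemma idem_inv: "E e \<Longrightarrow> i e = e"
  by (metis idem_def inv_unique is_inv_def)

lemma idem_mult: assumes e: "E e" and f: "E f" shows "E (m e f)"
proof -
  have eS: "e \<in> S" and fS: "f \<in> S" using e f idem_S by auto
  have ee[simp]: "m e e = e" "m f f = f" using e f idem_sq by auto
  have eet[simp]: "t \<in> S \<Longrightarrow> m e (m e t) = m e t" "t \<in> S \<Longrightarrow> m f (m f t) = m f t" for t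
    using e f idem_sqt by auto
  define x where "x = i (m e f)"
  have xS: "x \<in> S" using eS fS x_def by simp
  have h1: "m e (m f (m x (m e f))) = m e f" using inv1[of "m e f"] eS fS unfolding x_def by (metis assoc cl inv_S)
  have h1t: "t \<in> S \<Longrightarrow> m e (m f (m x (m e (m f t)))) = m e (m f t)" for t
    using h1 eS fS xS by (metis assoc cl)
  have h2: "m x (m e (m f x)) = x" using inv2[of "m e f"] eS fS unfolding x_def by (metis assoc cl inv_S)
  have h2t: "t \<in> S \<Longrightarrow> m x (m e (m f (m x t))) = m x t" for t
    using h2 eS fS xS by (metis assoc cl)
  define y where "y = m f (m x e)"
  have yS: "y \<in> S" using y_def eS fS xS by simp
  have y1: "m (m (m e f) y) (m e f) = m e f" unfolding y_def using eS fS xS h1 by (simp add: assoc)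
  have y2: "m (m y (m e f)) y = y" unfolding y_def using eS fS xS h2t by (simp add: assoc)
  have "is_inv S m (m e f) y" unfolding is_inv_def using yS y1 y2 by blast
  then have "y = x" using inv_unique[of "m e f" y] x_def eS fS by simp
  have xx: "m x x = x"
  proof -
    have "m x x = m (m f (m x e)) (m f (m x e))" using \<open>y = x\<close> y_def by simp
    also have "\<dots> = m f (m x (m e (m f (m x e))))" using eS fS xS by (simp add: assoc)
    also have "\<dots> = m f (m x e)" using h2t[of e] eS by simp
    also have "\<dots> = x" using \<open>y = x\<close> y_def by simp
    finally show ?thesis .
  qed
  then have Ex: "E x" using xS unfolding idem_def by auto
  have q1: "m (m x (m e f)) x = x" using h2 eS fS xS by (simp add: assoc)
  have q2: "m (m (m e f) x) (m e f) = m e f" using h1 eS fS xS by (simp add: assoc)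
  have "is_inv S m x (m e f)" unfolding is_inv_def using q1 q2 eS fS by simp
  then have "m e f = x" using inv_unique[OF xS, of "m e f"] idem_inv[OF Ex] by simp
  then show "E (m e f)" using Ex by simp
qed

lemma idem_comm: assumes e: "E e" and f: "E f" shows "m e f = m f e"
proof -
  have eS: "e \<in> S" and fS: "f \<in> S" using e f idem_S by auto
  have Ea: "E (m e f)" and Eb: "E (m f e)" using idem_mult e f by auto
  have ee[simp]: "m e e = e" "m f f = f" using e f idem_sq by auto
  have eet[simp]: "t \<in> S \<Longrightarrow> m e (m e t) = m e t" "t \<in> S \<Longrightarrow> m f (m f t) = m f t" for t
    using e f idem_sqt by auto
  have efef: "m e (m f (m e f)) = m e f" using Ea eS fS unfolding idem_def by (simp add: assoc)
  have efeft: "t \<in> S \<Longrightarrow> m e (m f (m e (m f t))) = m e (m f t)" for t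
    using efef eS fS by (metis assoc cl)
  have fefe: "m f (m e (m f e)) = m f e" using Eb eS fS unfolding idem_def by (simp add: assoc)
  have "is_inv S m (m e f) (m f e)"
    unfolding is_inv_def using eS fS efef efeft fefe by (simp add: assoc)
  then have "m f e = m e f" using inv_unique[of "m e f"] idem_inv[OF Ea] eS fS by auto
  then show "m e f = m f e" by simp
qed

lemma E_aia: assumes a: "a \<in> S" shows "E (m a (i a))"
proof -
  have "m (m a (i a)) (m a (i a)) = m a (m (i a) (m a (i a)))" using a assoc by simp
  then show ?thesis unfolding idem_def using a by simp
qed
lemma E_iaa: assumes a: "a \<in> S" shows "E (m (i a) a)"
proof -
  have "m (m (i a) a) (m (i a) a) = m (m (m (i a) a) (i a)) a" using a assoc by simp
  also have "\<dots> = m (i a) a" using a assoc by simp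
  finally show ?thesis unfolding idem_def using a by simp
qed

lemma inv_inv[simp]: "a \<in> S \<Longrightarrow> i (i a) = a"
proof -
  assume a: "a \<in> S"
  have "is_inv S m (i a) a" unfolding is_inv_def using a assoc by simp
  then show ?thesis using inv_unique[of "i a" a] a by simp
qed

lemma conjE: assumes e: "E e" and t: "t \<in> S" shows "E (m t (m e (i t)))"
proof -
  have eS: "e \<in> S" using e idem_S by auto
  have c: "m e (m (i t) t) = m (m (i t) t) e" using idem_comm[OF e E_iaa[OF t]] .
  have "m (m t (m e (i t))) (m t (m e (i t))) = m t (m (m e (m (i t) t)) (m e (i t)))"
    using eS t by (simp add: assoc)
  also have "\<dots> = m t (m (m (i t) t) (m (m e e) (i t)))" using c eS t by (simp add: assoc)
  also have "\<dots> = m t (m e (i t))" using e eS t idem_sq[OF e] by (simp add: assoc)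
  finally show ?thesis unfolding idem_def using eS t by simp
qed

lemma conjE': assumes e: "E e" and t: "t \<in> S" shows "E (m (i t) (m e t))"
  using conjE[OF e, of "i t"] t by simp

lemma inv_mult: assumes a: "a \<in> S" and b: "b \<in> S" shows "i (m a b) = m (i b) (i a)"
proof -
  have c1: "m (m b (i b)) (m (i a) a) = m (m (i a) a) (m b (i b))"
    using idem_comm E_aia E_iaa a b by blast
  have "is_inv S m (m a b) (m (i b) (i a))"
    unfolding is_inv_def
  proof (intro conjI)
    show "m (i b) (i a) \<in> S" using a b by simp
    have "m (m (m a b) (m (i b) (i a))) (m a b) = m a (m (m (m b (i b)) (m (i a) a)) b)"
      using a b by (simp add: assoc)
    also have "\<dots> = m a (m (m (m (i a) a) (m b (i b))) b)" using c1 by simp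
    also have "\<dots> = m a b" using a b by (simp add: assoc)
    finally show "m (m (m a b) (m (i b) (i a))) (m a b) = m a b" .
    have "m (m (m (i b) (i a)) (m a b)) (m (i b) (i a)) = m (i b) (m (m (m (i a) a) (m b (i b))) (i a))"
      using a b by (simp add: assoc)
    also have "\<dots> = m (i b) (m (m (m b (i b)) (m (i a) a)) (i a))" using c1 by simp
    also have "\<dots> = m (i b) (i a)" using a b by (simp add: assoc)
    finally show "m (m (m (i b) (i a)) (m a b)) (m (i b) (i a)) = m (i b) (i a)" .
  qed
  then show ?thesis using inv_unique a b by (metis cl)
qed

lemma le_S: "le s t \<Longrightarrow> s \<in> S \<and> t \<in> S" by (simp add: nat_le_def)

lemma le_leftI: "t \<in> S \<Longrightarrow> E e \<Longrightarrow> le (m e t) t"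
  unfolding nat_le_def using idem_S by auto

lemma le_refl: "t \<in> S \<Longrightarrow> le t t"
  using le_leftI[OF _ E_aia, of t t] by (simp add: assoc)

lemma le_trans: "le s t \<Longrightarrow> le t u \<Longrightarrow> le s u"
  unfolding nat_le_def by (metis assoc idem_S idem_mult)

lemma le_rightI: assumes t: "t \<in> S" and f: "E f" shows "le (m t f) t"
proof -
  have fS: "f \<in> S" using f idem_S by auto
  have "m t f = m (m t (m f (i t))) t"
  proof -
    have "m (m t (m f (i t))) t = m t (m f (m (i t) t))" using t fS by (simp add: assoc)
    also have "\<dots> = m t (m (m (i t) t) f)" using idem_comm[OF f E_iaa[OF t]] by simp
    also have "\<dots> = m t f" using t fS by (simp add: assoc)
    finally show ?thesis by simp
  qed
  then show ?thesis using le_leftI[OF t conjE[OF f t]] by simp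
qed

lemma le_mult_r: "le s t \<Longrightarrow> u \<in> S \<Longrightarrow> le (m s u) (m t u)"
  unfolding nat_le_def by (metis assoc cl idem_S)

lemma le_form: assumes "le s t" shows "s = m t (m (i t) s)"
proof -
  obtain e where e: "E e" "s = m e t" and t: "t \<in> S" using assms unfolding nat_le_def by auto
  have eS: "e \<in> S" using e idem_S by auto
  have "m t (m (i t) s) = m (m t (i t)) (m e t)" using e t eS by (simp add: assoc)
  also have "\<dots> = m (m e (m t (i t))) t" using idem_comm[OF e(1) E_aia[OF t]] t eS by (simp add: assoc)
  also have "\<dots> = s" using e t eS by (simp add: assoc)
  finally show ?thesis by simp
qed

lemma le_mult_l: assumes "le s t" "u \<in> S" shows "le (m u s) (m u t)"
proof -
  obtain e where e: "E e" "s = m e t" and t: "t \<in> S" using assms unfolding nat_le_def by auto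
  have eS: "e \<in> S" using e idem_S by auto
  have "s = m t (m (i t) (m e t))" using le_form[OF assms(1)] e by simp
  then have "m u s = m (m u t) (m (i t) (m e t))" using t eS assms(2) by (metis assoc cl inv_S)
  then show ?thesis using le_rightI[OF _ conjE'[OF e(1) t]] t assms(2) by simp
qed

lemma le_inv: assumes "le s t" shows "le (i s) (i t)"
proof -
  obtain e where e: "E e" "s = m e t" and t: "t \<in> S" using assms unfolding nat_le_def by auto
  have "i s = m (i t) e" using inv_mult[of e t] e t idem_inv idem_S by simp
  then show ?thesis using le_rightI[OF _ e(1)] t by simp
qed

lemma le_idem: "le s f \<Longrightarrow> E f \<Longrightarrow> E s"
  unfolding nat_le_def using idem_mult by auto

lemma le_antisym: assumes "le s t" "le t s" shows "s = t"
proof -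
  obtain e where e: "E e" "s = m e t" and t: "t \<in> S" using assms unfolding nat_le_def by auto
  obtain f where f: "E f" "t = m f s" and s: "s \<in> S" using assms unfolding nat_le_def by auto
  have eS: "e \<in> S" "f \<in> S" using e f idem_S by auto
  have tt: "t = m f (m e t)" using f(2) unfolding e(2) .
  then have "m e t = m e (m f (m e t))" by (rule arg_cong)
  also have "\<dots> = m (m e f) (m e t)" using eS t by (simp add: assoc)
  also have "\<dots> = m (m f e) (m e t)" using idem_comm[OF e(1) f(1)] by simp
  also have "\<dots> = m f (m e t)" using eS t idem_sqt[OF e(1)] by (simp add: assoc)
  finally have "m e t = m f (m e t)" .
  then have "m e t = t" using tt by simp
  then show ?thesis using e(2) by simp
qed

lemma le_leftI2: "t \<in> S \<Longrightarrow> E e \<Longrightarrow> s = m e t \<Longrightarrow> le s t" using le_leftI by simp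
lemma le_rightI2: "t \<in> S \<Longrightarrow> E e \<Longrightarrow> s = m t e \<Longrightarrow> le s t" using le_rightI by simp


lemma finite_max: assumes "finite X" "X \<subseteq> S" "y \<in> X"
  shows "\<exists>x\<in>X. le y x \<and> (\<forall>w\<in>X. le x w \<longrightarrow> w = x)"
  using assms
proof (induction X arbitrary: y rule: finite_induct)
  case empty then show ?case by simp
next
  case (insert a X)
  show ?case
  proof (cases "\<exists>w\<in>X. le y w")
    case True
    then obtain w where w: "w \<in> X" "le y w" by blast
    obtain x where x: "x \<in> X" "le w x" "\<forall>v\<in>X. le x v \<longrightarrow> v = x"
      using insert.IH[of w] w insert.prems by auto
    show ?thesis
    proof (cases "le x a")
      case True
      have "\<forall>v\<in>insert a X. le a v \<longrightarrow> v = a"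
        using x True le_trans le_antisym by blast
      then show ?thesis using le_trans[OF le_trans[OF w(2) x(2)] True] by blast
    next
      case False
      then show ?thesis using x le_trans[OF w(2) x(2)] by blast
    qed
  next
    case False
    then have "y = a" using insert.prems le_refl by blast
    then show ?thesis using False le_refl insert.prems by blast
  qed
qed

definition cset where "cset X \<longleftrightarrow> finite X \<and> X \<noteq> {} \<and> X \<subseteq> S \<and> (\<forall>s\<in>X. \<forall>t\<in>X. compatible S m s t)"
abbreviation dc where "dc X \<equiv> down_closure S le X"
abbreviation D where "D \<equiv> Dset S m"
abbreviation sm where "sm \<equiv> setmult m"

lemma dc_iff: "s \<in> dc X \<longleftrightarrow> s \<in> S \<and> (\<exists>x\<in>X. le s x)"
  by (simp add: down_closure_def)

lemma D_iff: "A \<in> D \<longleftrightarrow> (\<exists>X. cset X \<and> A = dc X)"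
  unfolding Dset_def cset_def by blast

lemma compat_le: assumes "le s x" "le t y" "compatible S m x y" shows "compatible S m s t"
proof -
  have S: "s \<in> S" "t \<in> S" "x \<in> S" "y \<in> S" using assms le_S by auto
  have "le (m (i s) t) (m (i x) y)"
    using le_trans[OF le_mult_r[OF le_inv[OF assms(1)] S(2)] le_mult_l[OF assms(2)]] S by simp
  moreover have "le (m s (i t)) (m x (i y))"
    using le_trans[OF le_mult_r[OF assms(1)] le_mult_l[OF le_inv[OF assms(2)]]] S by simp
  moreover have "E (m (i x) y)" "E (m x (i y))" using assms(3) unfolding compatible_def by auto
  ultimately show ?thesis using le_idem unfolding compatible_def by blast
qed

lemma compat_refl: "s \<in> S \<Longrightarrow> compatible S m s s"
  unfolding compatible_def using E_aia E_iaa by auto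

lemma D_S: assumes "A \<in> D" shows "A \<subseteq> S"
proof -
  obtain X where X: "A = dc X" using assms unfolding D_iff by blast
  show ?thesis unfolding X down_closure_def by blast
qed

lemma D_down: assumes "A \<in> D" "s \<in> A" "le t s" shows "t \<in> A"
proof -
  obtain X where X: "A = dc X" using assms(1) unfolding D_iff by blast
  have "s \<in> dc X" using assms(2) X by simp
  then obtain x where x: "x \<in> X" "le s x" unfolding dc_iff by blast
  then have "le t x" using le_trans assms(3) by blast
  then have "t \<in> dc X" unfolding dc_iff using le_S x(1) by blast
  then show ?thesis using X by simp
qed

lemma D_compat: assumes "A \<in> D" "s \<in> A" "t \<in> A" shows "compatible S m s t"
proof -
  obtain X where X: "A = dc X" "cset X" using assms(1) unfolding D_iff by blast
  have "s \<in> dc X" "t \<in> dc X" using assms(2,3) X by auto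
  then obtain x y where xy: "x \<in> X" "le s x" "y \<in> X" "le t y" unfolding dc_iff by blast
  then have "compatible S m x y" using X(2) unfolding cset_def by blast
  then show ?thesis using compat_le xy by blast
qed

lemma cset_single: "s \<in> S \<Longrightarrow> cset {s}" unfolding cset_def using compat_refl by auto

lemma dc_single_D: "s \<in> S \<Longrightarrow> dc {s} \<in> D" using cset_single[of s] unfolding D_iff by blast

lemma dc_single_mem: "s \<in> S \<Longrightarrow> s \<in> dc {s}" unfolding dc_iff using le_refl by simp

lemma dc_single_sub: assumes "A \<in> D" "s \<in> A" shows "dc {s} \<subseteq> A"
proof
  fix t assume "t \<in> dc {s}"
  then have "le t s" unfolding dc_iff by simp
  then show "t \<in> A" using D_down assms by blast
qed

lemma dc_single_le: "s \<in> dc {t} \<longleftrightarrow> le s t" unfolding dc_iff using le_S by blast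

lemma sm_iff: "x \<in> sm A B \<longleftrightarrow> (\<exists>a\<in>A. \<exists>b\<in>B. x = m a b)"
  unfolding setmult_def by blast

lemma sm_assoc: "A \<subseteq> S \<Longrightarrow> B \<subseteq> S \<Longrightarrow> C \<subseteq> S \<Longrightarrow> sm (sm A B) C = sm A (sm B C)"
proof (intro equalityI subsetI)
  fix x assume A: "A \<subseteq> S" "B \<subseteq> S" "C \<subseteq> S"
  { assume "x \<in> sm (sm A B) C"
    then obtain a b c where abc: "a \<in> A" "b \<in> B" "c \<in> C" "x = m (m a b) c" by (auto simp: sm_iff)
    then have x: "x = m a (m b c)" using A assoc[of a b c] by (simp add: subset_iff)
    have "m b c \<in> sm B C" using abc unfolding sm_iff by blast
    then show "x \<in> sm A (sm B C)" using abc(1) x unfolding sm_iff[of x] by blast }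
  { assume "x \<in> sm A (sm B C)"
    then obtain a b c where abc: "a \<in> A" "b \<in> B" "c \<in> C" "x = m a (m b c)" by (auto simp: sm_iff)
    then have x: "x = m (m a b) c" using A assoc[of a b c] by (simp add: subset_iff)
    have "m a b \<in> sm A B" using abc unfolding sm_iff by blast
    then show "x \<in> sm (sm A B) C" using abc(3) x unfolding sm_iff[of x] by blast }
qed

lemma sm_S: "A \<subseteq> S \<Longrightarrow> B \<subseteq> S \<Longrightarrow> sm A B \<subseteq> S"
  unfolding setmult_def using cl by blast

lemma sm_comm1: assumes "\<forall>a\<in>A. E a" "\<forall>b\<in>B. E b" "x \<in> sm A B" shows "x \<in> sm B A"
proof -
  obtain a b where ab: "a \<in> A" "b \<in> B" "x = m a b" using assms(3) unfolding sm_iff by blast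
  then have "x = m b a" using idem_comm assms by simp
  then show ?thesis using ab unfolding sm_iff by blast
qed

lemma sm_comm: "\<forall>a\<in>A. E a \<Longrightarrow> \<forall>b\<in>B. E b \<Longrightarrow> sm A B = sm B A"
  using sm_comm1 by blast

lemma dc_mult: assumes "X \<subseteq> S" "Y \<subseteq> S" shows "sm (dc X) (dc Y) = dc (sm X Y)"
proof
  show "sm (dc X) (dc Y) \<subseteq> dc (sm X Y)"
  proof
    fix s assume "s \<in> sm (dc X) (dc Y)"
    then obtain a b x y where ab: "s = m a b" "le a x" "le b y" "x \<in> X" "y \<in> Y"
      by (auto simp: sm_iff dc_iff)
    have "le (m a b) (m x y)"
      using le_trans[OF le_mult_r[OF ab(2)] le_mult_l[OF ab(3)]] le_S ab by blast
    moreover have "m x y \<in> sm X Y" using ab unfolding sm_iff by blast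
    ultimately show "s \<in> dc (sm X Y)" unfolding dc_iff using ab le_S by blast
  qed
next
  show "dc (sm X Y) \<subseteq> sm (dc X) (dc Y)"
  proof
    fix s assume "s \<in> dc (sm X Y)"
    then obtain x y where xy: "le s (m x y)" "x \<in> X" "y \<in> Y" by (auto simp: dc_iff sm_iff)
    obtain e where e: "E e" "s = m e (m x y)" using xy unfolding nat_le_def by blast
    have S: "x \<in> S" "y \<in> S" "e \<in> S" using xy assms e idem_S by auto
    have "s = m (m e x) y" using e S by (simp add: assoc)
    moreover have "m e x \<in> dc X" unfolding dc_iff using le_leftI[OF S(1) e(1)] xy S by auto
    moreover have "y \<in> dc Y" unfolding dc_iff using S xy le_refl by auto
    ultimately show "s \<in> sm (dc X) (dc Y)" unfolding sm_iff by blast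
  qed
qed

lemma compat_mult: assumes S: "x \<in> S" "x' \<in> S" "y \<in> S" "y' \<in> S"
  and c: "compatible S m x x'" "compatible S m y y'"
  shows "compatible S m (m x y) (m x' y')"
proof -
  have e: "E (m (i x) x')" "E (m x (i x'))" "E (m (i y) y')" "E (m y (i y'))" using c unfolding compatible_def by auto
  have eS: "m (i x) x' \<in> S" "m y (i y') \<in> S" using S by auto
  have 1: "m (i (m x y)) (m x' y') = m (i y) (m (m (i x) x') y')"
    using S inv_mult by (simp add: assoc)
  have "le (m (i y) (m (m (i x) x') y')) (m (i y) y')"
    using le_mult_l[OF le_leftI[OF S(4) e(1)]] S by simp
  then have E1: "E (m (i (m x y)) (m x' y'))" using 1 le_idem e(3) by simp
  have 2: "m (m x y) (i (m x' y')) = m (m x (m y (i y'))) (i x')"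
    using S inv_mult by (simp add: assoc)
  have "le (m (m x (m y (i y'))) (i x')) (m x (i x'))"
    using le_mult_r[OF le_rightI[OF S(1) e(4)]] S by simp
  then have E2: "E (m (m x y) (i (m x' y')))" using 2 le_idem e(2) by simp
  show ?thesis unfolding compatible_def using E1 E2 by simp
qed

lemma cset_mult: assumes "cset X" "cset Y" shows "cset (sm X Y)"
proof -
  have "sm X Y = (\<lambda>(x,y). m x y) ` (X \<times> Y)" unfolding setmult_def by auto
  then have "finite (sm X Y)" using assms unfolding cset_def by simp
  moreover have "sm X Y \<noteq> {}" using assms unfolding cset_def setmult_def by auto
  moreover have "sm X Y \<subseteq> S" using assms sm_S unfolding cset_def by auto
  moreover have "\<forall>s\<in>sm X Y. \<forall>t\<in>sm X Y. compatible S m s t"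
  proof (intro ballI)
    fix s t assume "s \<in> sm X Y" "t \<in> sm X Y"
    then obtain x y x' y' where xy: "x \<in> X" "y \<in> Y" "s = m x y" "x' \<in> X" "y' \<in> Y" "t = m x' y'"
      unfolding sm_iff by blast
    have "x \<in> S" "x' \<in> S" "y \<in> S" "y' \<in> S" using xy assms unfolding cset_def by auto
    moreover have "compatible S m x x'" "compatible S m y y'" using xy assms unfolding cset_def by auto
    ultimately show "compatible S m s t" using compat_mult xy by simp
  qed
  ultimately show ?thesis unfolding cset_def by blast
qed

lemma D_mult: assumes "A \<in> D" "B \<in> D" shows "sm A B \<in> D"
proof -
  obtain X where X: "cset X" "A = dc X" using assms(1) unfolding D_iff by blast
  obtain Y where Y: "cset Y" "B = dc Y" using assms(2) unfolding D_iff by blast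
  have "sm A B = dc (sm X Y)" using X Y dc_mult unfolding cset_def by blast
  moreover have "cset (sm X Y)" using cset_mult X Y by blast
  ultimately show ?thesis unfolding D_iff by blast
qed

lemma dc_inv: assumes "X \<subseteq> S" shows "dc (i ` X) = i ` dc X"
proof
  show "dc (i ` X) \<subseteq> i ` dc X"
  proof
    fix s assume "s \<in> dc (i ` X)"
    then obtain x where x: "x \<in> X" "le s (i x)" unfolding dc_iff by blast
    then have "le (i s) x" using le_inv[OF x(2)] assms le_S by auto
    then show "s \<in> i ` dc X" using dc_iff le_S x inv_inv by (metis image_eqI)
  qed
next
  show "i ` dc X \<subseteq> dc (i ` X)"
  proof
    fix s assume "s \<in> i ` dc X"
    then obtain t where t: "s = i t" "t \<in> dc X" by blast
    then obtain x where x: "le t x" "x \<in> X" unfolding dc_iff by blast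
    have "le s (i x)" using le_inv[OF x(1)] t by simp
    moreover have "i x \<in> i ` X" using x by blast
    ultimately show "s \<in> dc (i ` X)" unfolding dc_iff using le_S by blast
  qed
qed

lemma cset_inv: assumes "cset X" shows "cset (i ` X)"
  using assms unfolding cset_def compatible_def by (auto simp: subset_iff)

lemma D_inv: assumes "A \<in> D" shows "i ` A \<in> D"
proof -
  obtain X where X: "cset X" "A = dc X" using assms(1) unfolding D_iff by blast
  have "i ` A = dc (i ` X)" using X dc_inv unfolding cset_def by blast
  moreover have "cset (i ` X)" using cset_inv X by blast
  ultimately show ?thesis unfolding D_iff by blast
qed

lemma D_AiAA: assumes "A \<in> D" shows "sm (sm A (i ` A)) A = A"
proof
  show "sm (sm A (i ` A)) A \<subseteq> A"
  proof
    fix s assume "s \<in> sm (sm A (i ` A)) A"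
    then obtain a1 a2 a3 where a: "a1 \<in> A" "a2 \<in> A" "a3 \<in> A" "s = m (m a1 (i a2)) a3"
      by (auto simp: sm_iff)
    have "E (m a1 (i a2))" using D_compat[OF assms a(1,2)] unfolding compatible_def by simp
    then have "le s a3" using le_leftI a D_S[OF assms] by auto
    then show "s \<in> A" using D_down assms a by blast
  qed
next
  show "A \<subseteq> sm (sm A (i ` A)) A"
  proof
    fix a assume a: "a \<in> A"
    then have "a = m (m a (i a)) a" using D_S[OF assms] by (auto simp: assoc)
    moreover have "m a (i a) \<in> sm A (i ` A)" unfolding sm_iff using a by blast
    ultimately show "a \<in> sm (sm A (i ` A)) A" using a by (subst sm_iff) blast
  qed
qed

lemma inv_inv_set: "A \<subseteq> S \<Longrightarrow> i ` i ` A = A"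
  by (auto simp: subset_iff image_iff)

lemma D_iAAiA: assumes "A \<in> D" shows "sm (sm (i ` A) A) (i ` A) = i ` A"
  using D_AiAA[OF D_inv[OF assms]] inv_inv_set[OF D_S[OF assms]] by simp

lemma D_idem_sub: assumes A: "A \<in> D" and AA: "sm A A = A" shows "\<forall>a\<in>A. E a"
proof
  fix a assume a: "a \<in> A"
  obtain X where X: "cset X" "A = dc X" using A unfolding D_iff by blast
  have XS: "finite X" "X \<subseteq> S" using X(1) unfolding cset_def by auto
  have "a \<in> dc X" using a X by simp
  then obtain y where y: "y \<in> X" "le a y" unfolding dc_iff by blast
  obtain x where x: "x \<in> X" "le y x" "\<forall>w\<in>X. le x w \<longrightarrow> w = x" using finite_max[OF XS y(1)] by blast
  have xS: "x \<in> S" using x XS by auto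
  have "x \<in> dc X" unfolding dc_iff using x xS le_refl by blast
  then have xA: "x \<in> A" using X by simp
  then have "x \<in> sm A A" using AA by simp
  then obtain p q where pq: "p \<in> A" "q \<in> A" "x = m p q" unfolding sm_iff by blast
  have pqS: "p \<in> S" "q \<in> S" using pq D_S[OF A] by auto
  have "E (m (i p) x)" using D_compat[OF A pq(1) xA] unfolding compatible_def by simp
  moreover have "x = m p (m (i p) x)" using pq pqS by simp
  ultimately have xp: "le x p" using le_rightI2 pqS by blast
  have "E (m x (i q))" using D_compat[OF A xA pq(2)] unfolding compatible_def by simp
  moreover have "x = m (m x (i q)) q" using pq pqS by (simp add: assoc)
  ultimately have xq: "le x q" using le_leftI2 pqS by blast
  have mx: "\<And>r. r \<in> A \<Longrightarrow> le x r \<Longrightarrow> r = x"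
  proof -
    fix r assume r: "r \<in> A" "le x r"
    have "r \<in> dc X" using r X by simp
    then obtain w where w: "w \<in> X" "le r w" unfolding dc_iff by blast
    then have "w = x" using x le_trans[OF r(2)] by blast
    then show "r = x" using le_antisym r w by blast
  qed
  have "p = x" "q = x" using mx[OF pq(1) xp] mx[OF pq(2) xq] by auto
  then have "x = m x x" using pq(3) by metis
  then have "E x" using xS unfolding idem_def by simp
  then show "E a" using le_idem le_trans[OF y(2) x(2)] by blast
qed


lemma D_idem_of_E: assumes C: "C \<in> D" and E: "\<forall>c\<in>C. E c" shows "sm C C = C"
proof
  show "sm C C \<subseteq> C"
  proof
    fix x assume "x \<in> sm C C"
    then obtain c d where cd: "c \<in> C" "d \<in> C" "x = m c d" unfolding sm_iff by blast
    have "le x d" using le_leftI cd E D_S[OF C] by blast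
    then show "x \<in> C" using D_down[OF C cd(2)] by blast
  qed
next
  show "C \<subseteq> sm C C"
  proof
    fix c assume c: "c \<in> C"
    then have "c = m c c" using E idem_sq by simp
    then show "c \<in> sm C C" unfolding sm_iff using c by blast
  qed
qed

lemma D_inv_is: assumes "A \<in> D" shows "is_inv D sm A (i ` A)"
  unfolding is_inv_def using D_inv[OF assms] D_AiAA[OF assms] D_iAAiA[OF assms] by blast

lemma D_inv_unique: assumes A: "A \<in> D" and B: "is_inv D sm A B" shows "B = i ` A"
proof -
  define a where "a = A"
  define b where "b = B"
  define c where "c = i ` A"
  have aD: "a \<in> D" and bD: "b \<in> D" and cD: "c \<in> D"
    using A B D_inv unfolding a_def b_def c_def is_inv_def by auto
  have aS: "a \<subseteq> S" and bS: "b \<subseteq> S" and cS: "c \<subseteq> S" using aD bD cD D_S by auto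
  have F1': "sm (sm a b) a = a" and F2': "sm (sm b a) b = b" using B unfolding is_inv_def a_def b_def by auto
  have F3': "sm (sm a c) a = a" and F4': "sm (sm c a) c = c"
    using D_inv_is[OF A] unfolding is_inv_def a_def c_def by auto
  note SS = aS bS cS sm_S
  have F1: "sm a (sm b a) = a" using F1' SS by (simp add: sm_assoc)
  have F2: "sm b (sm a b) = b" using F2' SS by (simp add: sm_assoc)
  have F3: "sm a (sm c a) = a" using F3' SS by (simp add: sm_assoc)
  have F4: "sm c (sm a c) = c" using F4' SS by (simp add: sm_assoc)
  have idba: "sm (sm b a) (sm b a) = sm b a"
  proof -
    have "sm (sm b a) (sm b a) = sm (sm b (sm a b)) a" using SS by (simp add: sm_assoc)
    then show ?thesis using F2 by simp
  qed
  have idca: "sm (sm c a) (sm c a) = sm c a"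
  proof -
    have "sm (sm c a) (sm c a) = sm (sm c (sm a c)) a" using SS by (simp add: sm_assoc)
    then show ?thesis using F4 by simp
  qed
  have idab: "sm (sm a b) (sm a b) = sm a b"
  proof -
    have "sm (sm a b) (sm a b) = sm (sm a (sm b a)) b" using SS by (simp add: sm_assoc)
    then show ?thesis using F1 by simp
  qed
  have idac: "sm (sm a c) (sm a c) = sm a c"
  proof -
    have "sm (sm a c) (sm a c) = sm (sm a (sm c a)) c" using SS by (simp add: sm_assoc)
    then show ?thesis using F3 by simp
  qed
  have Eba: "\<forall>x\<in>sm b a. E x" using D_idem_sub[OF D_mult[OF bD aD] idba] .
  have Eca: "\<forall>x\<in>sm c a. E x" using D_idem_sub[OF D_mult[OF cD aD] idca] .
  have Eab: "\<forall>x\<in>sm a b. E x" using D_idem_sub[OF D_mult[OF aD bD] idab] .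
  have Eac: "\<forall>x\<in>sm a c. E x" using D_idem_sub[OF D_mult[OF aD cD] idac] .
  have C1: "sm (sm b a) (sm c a) = sm (sm c a) (sm b a)" using sm_comm Eba Eca by blast
  have C2: "sm (sm a b) (sm a c) = sm (sm a c) (sm a b)" using sm_comm Eab Eac by blast
  have "b = sm (sm b a) b" using F2' by simp
  also have "\<dots> = sm (sm b (sm (sm a c) a)) b" using F3' by simp
  also have "\<dots> = sm (sm (sm b a) (sm c a)) b" using SS by (simp add: sm_assoc)
  also have "\<dots> = sm (sm (sm c a) (sm b a)) b" using C1 by simp
  also have "\<dots> = sm (sm c a) (sm (sm b a) b)" using SS by (simp add: sm_assoc)
  also have "\<dots> = sm (sm c a) b" using F2' by simp
  finally have bb: "b = sm (sm c a) b" .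
  have "c = sm (sm c a) c" using F4' by simp
  also have "\<dots> = sm (sm c (sm (sm a b) a)) c" using F1' by simp
  also have "\<dots> = sm c (sm (sm a b) (sm a c))" using SS by (simp add: sm_assoc)
  also have "\<dots> = sm c (sm (sm a c) (sm a b))" using C2 by simp
  also have "\<dots> = sm (sm (sm c a) c) (sm a b)" using SS by (simp add: sm_assoc)
  also have "\<dots> = sm c (sm a b)" using F4' by simp
  also have "\<dots> = sm (sm c a) b" using SS by (simp add: sm_assoc)
  finally have "c = sm (sm c a) b" .
  then show ?thesis using bb unfolding b_def c_def by simp
qed

lemma D_sinv: assumes "A \<in> D" shows "sinv D sm A = i ` A"
proof -
  have "(THE b. is_inv D sm A b) = i ` A" using D_inv_is[OF assms] D_inv_unique[OF assms] by (rule the_equality)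
  then show ?thesis by (simp only: sinv_def)
qed

lemma D_compatible: assumes A: "A \<in> D" and B: "B \<in> D" and AB: "A \<union> B \<in> D"
  shows "compatible D sm A B"
proof -
  have c: "\<And>x y. x \<in> A \<union> B \<Longrightarrow> y \<in> A \<union> B \<Longrightarrow> compatible S m x y" using D_compat[OF AB] by blast
  have C1: "sm (i ` A) B \<in> D" using D_mult[OF D_inv[OF A] B] .
  have E1: "\<forall>x\<in>sm (i ` A) B. E x"
  proof
    fix x assume "x \<in> sm (i ` A) B"
    then obtain a b where ab: "a \<in> A" "b \<in> B" "x = m (i a) b" unfolding sm_iff by blast
    then show "E x" using c[of a b] unfolding compatible_def by simp
  qed
  have C2: "sm A (i ` B) \<in> D" using D_mult[OF A D_inv[OF B]] .
  have E2: "\<forall>x\<in>sm A (i ` B). E x"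
  proof
    fix x assume "x \<in> sm A (i ` B)"
    then obtain a b where ab: "a \<in> A" "b \<in> B" "x = m a (i b)" unfolding sm_iff by blast
    then show "E x" using c[of a b] unfolding compatible_def by simp
  qed
  show ?thesis unfolding compatible_def D_sinv[OF A] D_sinv[OF B] idem_def
    using C1 C2 D_idem_of_E E1 E2 by blast
qed

abbreviation PF where "PF z F \<equiv> proper_filter S le z F"
definition phi where "phi F = {A \<in> D. A \<inter> F \<noteq> {}}"

lemma filt_up: assumes "is_filter S le F" "x \<in> F" "le x s" shows "s \<in> F"
proof -
  have "s \<in> up_closure S le F" unfolding up_closure_def using assms(2,3) le_S by blast
  then show ?thesis using assms(1) unfolding is_filter_def by blast
qed

lemma filt_props: assumes "is_filter C r F"
  shows "F \<noteq> {}" "F \<subseteq> C" "\<And>a b. a \<in> F \<Longrightarrow> b \<in> F \<Longrightarrow> \<exists>c\<in>F. r c a \<and> r c b"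
    "\<And>x s. x \<in> F \<Longrightarrow> s \<in> C \<Longrightarrow> r x s \<Longrightarrow> s \<in> F"
proof -
  show "F \<noteq> {}" "F \<subseteq> C" "\<And>a b. a \<in> F \<Longrightarrow> b \<in> F \<Longrightarrow> \<exists>c\<in>F. r c a \<and> r c b"
    using assms unfolding is_filter_def by auto
  fix x s assume "x \<in> F" "s \<in> C" "r x s"
  then have "s \<in> up_closure C r F" unfolding up_closure_def by blast
  then show "s \<in> F" using assms unfolding is_filter_def by blast
qed

lemma is_filterI: assumes "F \<noteq> {}" "F \<subseteq> C" "\<And>a b. a \<in> F \<Longrightarrow> b \<in> F \<Longrightarrow> \<exists>c\<in>F. r c a \<and> r c b"
    "\<And>x s. x \<in> F \<Longrightarrow> s \<in> C \<Longrightarrow> r x s \<Longrightarrow> s \<in> F"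
    "\<And>x. x \<in> F \<Longrightarrow> r x x"
  shows "is_filter C r F"
proof -
  have "F = up_closure C r F"
  proof
    show "F \<subseteq> up_closure C r F" unfolding up_closure_def using assms(2,5) by blast
    show "up_closure C r F \<subseteq> F" unfolding up_closure_def using assms(4) by blast
  qed
  then show ?thesis unfolding is_filter_def using assms(1-3) by blast
qed

context
  fixes z assumes z: "is_zero S m z"
begin

lemma zS: "z \<in> S" using z unfolding is_zero_def by simp

lemma dc_z: "dc {z} = {z}"
proof
  show "dc {z} \<subseteq> {z}"
  proof
    fix s assume "s \<in> dc {z}"
    then have "le s z" unfolding dc_iff by simp
    then obtain e where "E e" "s = m e z" unfolding nat_le_def by blast
    then show "s \<in> {z}" using z idem_S unfolding is_zero_def by auto
  qed
  show "{z} \<subseteq> dc {z}" using dc_single_mem zS by simp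
qed

lemma partA: assumes F: "PF z F" shows "prime_filter_D S m z (phi F)"
proof -
  have Ff: "is_filter S le F" and zF: "z \<notin> F" using F unfolding proper_filter_def by auto
  note fp = filt_props[OF Ff]
  have "is_filter D (\<subseteq>) (phi F)"
  proof (rule is_filterI)
    obtain s where s: "s \<in> F" using fp(1) by blast
    then have "s \<in> S" using fp(2) by blast
    then have "dc {s} \<in> phi F" unfolding phi_def using dc_single_D dc_single_mem s by blast
    then show "phi F \<noteq> {}" by blast
    show "phi F \<subseteq> D" unfolding phi_def by blast
    show "\<And>x. x \<in> phi F \<Longrightarrow> x \<subseteq> x" by simp
    show "\<And>x s. x \<in> phi F \<Longrightarrow> s \<in> D \<Longrightarrow> x \<subseteq> s \<Longrightarrow> s \<in> phi F"
      unfolding phi_def by blast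
    fix A B assume AB: "A \<in> phi F" "B \<in> phi F"
    then obtain a b where ab: "a \<in> A" "a \<in> F" "b \<in> B" "b \<in> F" "A \<in> D" "B \<in> D" unfolding phi_def by blast
    obtain c where c: "c \<in> F" "le c a" "le c b" using fp(3)[OF ab(2,4)] by blast
    have cS: "c \<in> S" using c le_S by blast
    have "c \<in> A" "c \<in> B" using D_down ab c by blast+
    then have "dc {c} \<subseteq> A" "dc {c} \<subseteq> B" using dc_single_sub ab by blast+
    moreover have "dc {c} \<in> phi F" unfolding phi_def using dc_single_D dc_single_mem cS c by blast
    ultimately show "\<exists>C\<in>phi F. C \<subseteq> A \<and> C \<subseteq> B" by blast
  qed
  moreover have "{z} \<notin> phi F" unfolding phi_def using zF by blast
  moreover have "\<forall>a\<in>D. \<forall>b\<in>D. compatible D sm a b \<and> a \<union> b \<in> phi F \<longrightarrow> a \<in> phi F \<or> b \<in> phi F"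
    unfolding phi_def by blast
  ultimately show ?thesis unfolding prime_filter_D_def proper_filter_def by blast
qed

lemma partB: assumes F: "PF z F" and G: "PF z G" shows "F \<subseteq> G \<longleftrightarrow> phi F \<subseteq> phi G"
proof
  assume "F \<subseteq> G" then show "phi F \<subseteq> phi G" unfolding phi_def by blast
next
  assume FG: "phi F \<subseteq> phi G"
  have Ff: "is_filter S le F" and Gf: "is_filter S le G" using F G unfolding proper_filter_def by auto
  show "F \<subseteq> G"
  proof
    fix s assume s: "s \<in> F"
    then have sS: "s \<in> S" using filt_props(2)[OF Ff] by blast
    then have "dc {s} \<in> phi F" unfolding phi_def using dc_single_D dc_single_mem s by blast
    then have "dc {s} \<in> phi G" using FG by blast
    then obtain t where "t \<in> dc {s}" "t \<in> G" unfolding phi_def by blast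
    then show "s \<in> G" using filt_up[OF Gf] dc_single_le by blast
  qed
qed

lemma crux: assumes P: "prime_filter_D S m z P" and X: "cset X" and XP: "dc X \<in> P"
  shows "\<exists>x\<in>X. dc {x} \<in> P"
proof -
  have fin: "finite X" "X \<noteq> {}" using X unfolding cset_def by auto
  have pr: "\<And>a b. a \<in> D \<Longrightarrow> b \<in> D \<Longrightarrow> compatible D sm a b \<Longrightarrow> a \<union> b \<in> P \<Longrightarrow> a \<in> P \<or> b \<in> P"
    using P unfolding prime_filter_D_def by blast
  show ?thesis using fin X XP
  proof (induction X rule: finite_ne_induct)
    case (singleton x) then show ?case by simp
  next
    case (insert x F)
    have cF: "cset F" using insert.prems insert.hyps unfolding cset_def by auto
    have xS: "x \<in> S" using insert.prems unfolding cset_def by auto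
    have u: "dc (insert x F) = dc {x} \<union> dc F" unfolding down_closure_def by blast
    have D1: "dc {x} \<in> D" using dc_single_D xS by blast
    have D2: "dc F \<in> D" using cF unfolding D_iff by blast
    have D3: "dc {x} \<union> dc F \<in> D" unfolding u[symmetric] using insert.prems(1) unfolding D_iff by blast
    have "compatible D sm (dc {x}) (dc F)" using D_compatible D1 D2 D3 by blast
    then have "dc {x} \<in> P \<or> dc F \<in> P" using pr D1 D2 insert.prems(2) u by simp
    then show ?case using insert.IH cF by blast
  qed
qed

lemma crux2: assumes P: "prime_filter_D S m z P" and A: "A \<in> P" shows "\<exists>s\<in>A. dc {s} \<in> P"
proof -
  have "is_filter D (\<subseteq>) P" using P unfolding prime_filter_D_def proper_filter_def by blast
  then have "A \<in> D" using A filt_props(2) by blast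
  then obtain X where X: "cset X" "A = dc X" unfolding D_iff by blast
  then obtain x where x: "x \<in> X" "dc {x} \<in> P" using crux P A by blast
  have "x \<in> S" using X x unfolding cset_def by blast
  then have "x \<in> dc X" using x le_refl unfolding dc_iff by blast
  then have "x \<in> A" using X by simp
  then show ?thesis using x by blast
qed

lemma partC: assumes P: "prime_filter_D S m z P" shows "\<exists>F. PF z F \<and> phi F = P"
proof -
  have Pf: "is_filter D (\<subseteq>) P" and zP: "{z} \<notin> P" using P unfolding prime_filter_D_def proper_filter_def by auto
  note fp = filt_props[OF Pf]
  define F where "F = {s \<in> S. dc {s} \<in> P}"
  have "is_filter S le F"
  proof (rule is_filterI)
    obtain A where "A \<in> P" using fp(1) by blast
    then obtain s where s: "s \<in> A" "dc {s} \<in> P" using crux2 P by blast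
    have "s \<in> S" using s fp(2) D_S \<open>A \<in> P\<close> by blast
    then show "F \<noteq> {}" unfolding F_def using s by blast
    show "F \<subseteq> S" unfolding F_def by blast
    show "\<And>x. x \<in> F \<Longrightarrow> le x x" unfolding F_def using le_refl by blast
    show "\<And>x s. x \<in> F \<Longrightarrow> s \<in> S \<Longrightarrow> le x s \<Longrightarrow> s \<in> F"
    proof -
      fix x s assume xs: "x \<in> F" "s \<in> S" "le x s"
      have "dc {x} \<subseteq> dc {s}"
      proof
        fix t assume "t \<in> dc {x}"
        then have "le t x" using dc_single_le by blast
        then have "le t s" using xs(3) le_trans by blast
        then show "t \<in> dc {s}" using dc_single_le by blast
      qed
      then have "dc {s} \<in> P" using fp(4) xs dc_single_D unfolding F_def by blast
      then show "s \<in> F" unfolding F_def using xs by blast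
    qed
    fix a b assume ab: "a \<in> F" "b \<in> F"
    then obtain C where C: "C \<in> P" "C \<subseteq> dc {a}" "C \<subseteq> dc {b}" using fp(3) unfolding F_def by blast
    then obtain c where c: "c \<in> C" "dc {c} \<in> P" using crux2 P by blast
    have "le c a" "le c b" using c C dc_single_le by blast+
    moreover have "c \<in> F" unfolding F_def using c le_S calculation by blast
    ultimately show "\<exists>c\<in>F. le c a \<and> le c b" by blast
  qed
  moreover have "z \<notin> F" unfolding F_def using dc_z zP by simp
  moreover have "phi F = P"
  proof
    show "phi F \<subseteq> P"
    proof
      fix A assume "A \<in> phi F"
      then obtain s where s: "A \<in> D" "s \<in> A" "dc {s} \<in> P" unfolding phi_def F_def by blast
      then show "A \<in> P" using fp(4)[OF s(3) s(1) dc_single_sub[OF s(1,2)]] by blast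
    qed
    show "P \<subseteq> phi F"
    proof
      fix A assume A: "A \<in> P"
      then obtain s where s: "s \<in> A" "dc {s} \<in> P" using crux2 P by blast
      have AD: "A \<in> D" using A fp(2) by blast
      then have "s \<in> S" using D_S s by blast
      then show "A \<in> phi F" unfolding phi_def F_def using AD s by blast
    qed
  qed
  ultimately show ?thesis unfolding proper_filter_def by blast
qed

lemma main: "\<exists>f. bij_betw f {F. PF z F} {P. prime_filter_D S m z P} \<and>
    (\<forall>F\<in>{F. PF z F}. \<forall>G\<in>{F. PF z F}. F \<subseteq> G \<longleftrightarrow> f F \<subseteq> f G)"
proof (intro exI conjI)
  show ord: "\<forall>F\<in>{F. PF z F}. \<forall>G\<in>{F. PF z F}. F \<subseteq> G \<longleftrightarrow> phi F \<subseteq> phi G"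
    using partB by blast
  show "bij_betw phi {F. PF z F} {P. prime_filter_D S m z P}"
    unfolding bij_betw_def
  proof
    show "inj_on phi {F. PF z F}"
      unfolding inj_on_def using ord by blast
    show "phi ` {F. PF z F} = {P. prime_filter_D S m z P}"
      using partA partC by blast
  qed
qed

end

end

theorem lemma2p14:
  fixes S :: "'a set" and m :: "'a \<Rightarrow> 'a \<Rightarrow> 'a" and z :: 'a
  assumes "inverse_semigroup S m" and "is_zero S m z"
  shows "\<exists>f. bij_betw f {F. proper_filter S (nat_le S m) z F} {P. prime_filter_D S m z P} \<and>
    (\<forall>F\<in>{F. proper_filter S (nat_le S m) z F}. \<forall>G\<in>{F. proper_filter S (nat_le S m) z F}.
        F \<subseteq> G \<longleftrightarrow> f F \<subseteq> f G)"
proof -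
  interpret isg S m using assms(1) by unfold_locales
  show ?thesis using main[OF assms(2)] .
qed

end
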